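(* Fix $e\in\mathbb Z_{>0}$, and for $0\leqslant h\leqslant 2e-1$ let $\gamma^{(e)}_h=\sum_{j=0}^{h}(-1)^{h+j}\binom{2e+1}{h-j}y^{j+1}_{j+e+2}$. Then \[ \sum_{i=0}^{2e-1}\gamma^{(e)}_i=(2e-1)!!,\qquad \sum_{i=0}^{2e-1}(i+1)\gamma^{(e)}_i=e\,(2e-1)!!. \]
   Context: Let $\mathbb N=\mathbb Z_{\geqslant 0}$ with the componentwise partial order on $\mathbb N^n$. For integers $n,d\geqslant 0$, an $(n-1)$-dimensional partition of size $d$ is a subset $\lambda\subset\mathbb N^n$ with $|\lambda|=d$ such that $\mathbf a\in\lambda$ and $\mathbf y\leqslant\mathbf a$ imply $\mathbf y\in\lambda$; $\mathrm P^n_d$ is the set of these. The embedding dimension $h_\lambda(1)$ is the number of elements of $\lambda$ whose coordinates sum to $1$. Define $y^k_d=|\{\lambda\in\mathrm P^k_d: h_\lambda(1)=k\}|$. *)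

theory Defs
  imports Main
begin

definition vle :: "nat list \<Rightarrow> nat list \<Rightarrow> bool" where
  "vle y a \<longleftrightarrow> length y = length a \<and> (\<forall>i<length a. y ! i \<le> a ! i)"

text \<open>(n-1)-dimensional partitions of size d: downward closed subsets of N^n of cardinality d.\<close>

definition partitions :: "nat \<Rightarrow> nat \<Rightarrow> nat list set set" where
  "partitions n d = {lam. lam \<subseteq> {a. length a = n} \<and> finite lam \<and> card lam = d \<and>
      (\<forall>a\<in>lam. \<forall>y. vle y a \<longrightarrow> y \<in> lam)}"

definition emb_dim :: "nat list set \<Rightarrow> nat" where
  "emb_dim lam = card {a\<in>lam. sum_list a = 1}"

definition ycount :: "nat \<Rightarrow> nat \<Rightarrow> nat" where
  "ycount k d = card {lam \<in> partitions k d. emb_dim lam = k}"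

fun dfact :: "nat \<Rightarrow> nat" where
  "dfact 0 = 1"
| "dfact (Suc 0) = 1"
| "dfact (Suc (Suc n)) = Suc (Suc n) * dfact n"

definition gamma :: "nat \<Rightarrow> nat \<Rightarrow> int" where
  "gamma e h = (\<Sum>j=0..h. (-1) ^ (h + j) * int ((2*e+1) choose (h - j)) * int (ycount (j+1) (j+e+2)))"

end

theory Submission
  imports Defs
begin
lemma sum_list_nth: "sum_list (a::nat list) = (\<Sum>i<length a. a!i)"
  by (simp add: sum_list_sum_nth atLeast0LessThan)

lemma nth_le_sum: "i < length a \<Longrightarrow> (a::nat list)!i \<le> sum_list a"
proof -
  assume "i < length a"
  then have "(\<Sum>t\<in>{i}. a!t) \<le> (\<Sum>t<length a. a!t)"
    by (intro sum_mono2) auto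
  then show ?thesis by (simp add: sum_list_nth)
qed

lemma nth2_le_sum: "i < length a \<Longrightarrow> j < length a \<Longrightarrow> i \<noteq> j \<Longrightarrow> (a::nat list)!i + a!j \<le> sum_list a"
proof -
  assume "i < length a" "j < length a" "i \<noteq> j"
  then have "(\<Sum>t\<in>{i,j}. a!t) \<le> (\<Sum>t<length a. a!t)"
    by (intro sum_mono2) auto
  then show ?thesis using \<open>i\<noteq>j\<close> by (simp add: sum_list_nth)
qed

lemma sum_map_upt: "sum_list (map (f::nat\<Rightarrow>nat) [0..<n]) = (\<Sum>i<n. f i)"
  by (simp add: interv_sum_list_conv_sum_set_nat atLeast0LessThan)

lemma vle_sum: "vle y a \<Longrightarrow> sum_list y \<le> sum_list a"
  unfolding vle_def sum_list_nth by (auto intro: sum_mono)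

lemma vle_sum_eq: assumes "vle y a" "sum_list y = sum_list a" shows "y = a"
proof (rule ccontr)
  assume "y \<noteq> a"
  with assms(1) obtain i where i: "i < length a" "y!i \<noteq> a!i"
    unfolding vle_def by (metis nth_equalityI)
  with assms(1) have "y!i < a!i" unfolding vle_def by (simp add: order_less_le)
  then have "(\<Sum>t<length a. y!t) < (\<Sum>t<length a. a!t)"
    using assms(1) i unfolding vle_def by (intro sum_strict_mono_ex1) auto
  with assms show False unfolding vle_def sum_list_nth by simp
qed

lemma vle_refl: "vle a a" by (simp add: vle_def)

lemma vle_trans: "vle x y \<Longrightarrow> vle y z \<Longrightarrow> vle x z"
  unfolding vle_def by (metis order_trans)

definition unitv :: "nat \<Rightarrow> nat \<Rightarrow> nat list" where
  "unitv k i = map (\<lambda>t. if t = i then 1 else 0) [0..<k]"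

lemma unitv_len[simp]: "length (unitv k i) = k" by (simp add: unitv_def)
lemma unitv_nth[simp]: "t < k \<Longrightarrow> unitv k i ! t = (if t = i then 1 else 0)" by (simp add: unitv_def)
lemma unitv_sum: "i < k \<Longrightarrow> sum_list (unitv k i) = 1"
  by (simp add: unitv_def sum_map_upt)

definition U :: "nat \<Rightarrow> nat list set" where "U k = {a. length a = k \<and> sum_list a = 1}"

lemma U_eq: "U k = unitv k ` {..<k}"
proof
  show "unitv k ` {..<k} \<subseteq> U k" by (auto simp: U_def unitv_sum)
next
  show "U k \<subseteq> unitv k ` {..<k}"
  proof
    fix a assume "a \<in> U k"
    then have a: "length a = k" "sum_list a = 1" by (auto simp: U_def)
    then obtain i where i: "i < k" "a!i \<noteq> 0"
      using sum_list_nth[of a] by (metis lessThan_iff sum.neutral zero_neq_one)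
    have ai: "a!i = 1" using nth_le_sum[of i a] a i by simp
    have "a = unitv k i"
    proof (rule nth_equalityI)
      fix t assume "t < length a"
      then show "a!t = unitv k i ! t"
        using nth2_le_sum[of t a i] a i ai by auto
    qed (simp add: a)
    then show "a \<in> unitv k ` {..<k}" using i by auto
  qed
qed

lemma card_U: "card (U k) = k"
proof -
  have "inj_on (unitv k) {..<k}"
  proof
    fix i j assume "i \<in> {..<k}" "j \<in> {..<k}" "unitv k i = unitv k j"
    then have "unitv k i ! i = unitv k j ! i" by simp
    with \<open>i \<in> {..<k}\<close> show "i = j" by (auto split: if_splits)
  qed
  then show ?thesis by (simp add: U_eq card_image)
qed

lemma finite_U: "finite (U k)" by (simp add: U_eq)

definition Low :: "nat \<Rightarrow> nat list set" where "Low k = {a. length a = k \<and> sum_list a \<le> 1}"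

lemma Low_eq: "Low k = insert (replicate k 0) (U k)"
proof -
  have h: "sum_list a = 0 \<Longrightarrow> a = replicate (length a) 0" for a :: "nat list"
    by (metis list.set_cases replicate_length_same sum_list_eq_0_iff)
  have "length a = k \<Longrightarrow> sum_list a \<le> 1 \<Longrightarrow> a \<noteq> replicate k 0 \<Longrightarrow> sum_list a = 1" for a :: "nat list"
    using h[of a] by (cases "sum_list a") auto
  then show ?thesis by (auto simp: Low_def U_def sum_list_replicate)
qed

lemma card_Low: "card (Low k) = Suc k"
proof -
  have "replicate k 0 \<notin> U k" by (simp add: U_def sum_list_replicate)
  then show ?thesis by (simp add: Low_eq finite_U card_U)
qed

lemma finite_Low: "finite (Low k)" by (simp add: Low_eq finite_U)

definition Cfg :: "nat \<Rightarrow> nat \<Rightarrow> nat list set set" where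
  "Cfg k e = {E. finite E \<and> card E = e \<and> (\<forall>a\<in>E. length a = k \<and> 2 \<le> sum_list a)
      \<and> (\<forall>a\<in>E. \<forall>y. vle y a \<and> 2 \<le> sum_list y \<longrightarrow> y \<in> E)}"
lemma CfgD: assumes "E \<in> Cfg k e"
  shows "finite E" "card E = e" "\<And>a. a \<in> E \<Longrightarrow> length a = k" "\<And>a. a \<in> E \<Longrightarrow> 2 \<le> sum_list a"
    "\<And>a y. a \<in> E \<Longrightarrow> vle y a \<Longrightarrow> 2 \<le> sum_list y \<Longrightarrow> y \<in> E"
proof -
  have C: "finite E \<and> card E = e \<and> (\<forall>a\<in>E. length a = k \<and> 2 \<le> sum_list a)
      \<and> (\<forall>a\<in>E. \<forall>y. vle y a \<and> 2 \<le> sum_list y \<longrightarrow> y \<in> E)"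
    using assms unfolding Cfg_def by (rule CollectD)
  show "finite E" "card E = e" using C by simp_all
  show "\<And>a. a \<in> E \<Longrightarrow> length a = k" "\<And>a. a \<in> E \<Longrightarrow> 2 \<le> sum_list a" using C by simp_all
  show "\<And>a y. a \<in> E \<Longrightarrow> vle y a \<Longrightarrow> 2 \<le> sum_list y \<Longrightarrow> y \<in> E" using C by blast
qed
lemma CfgI: assumes "finite E" "card E = e" "\<And>a. a \<in> E \<Longrightarrow> length a = k" "\<And>a. a \<in> E \<Longrightarrow> 2 \<le> sum_list a"
    "\<And>a y. a \<in> E \<Longrightarrow> vle y a \<Longrightarrow> 2 \<le> sum_list y \<Longrightarrow> y \<in> E"
  shows "E \<in> Cfg k e"
  unfolding Cfg_def mem_Collect_eq using assms by blast

lemma partD: assumes "lam \<in> partitions n d"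
  shows "lam \<subseteq> {a. length a = n}" "finite lam" "card lam = d"
    "\<And>a y. a \<in> lam \<Longrightarrow> vle y a \<Longrightarrow> y \<in> lam"
proof -
  have C: "lam \<subseteq> {a. length a = n} \<and> finite lam \<and> card lam = d \<and>
      (\<forall>a\<in>lam. \<forall>y. vle y a \<longrightarrow> y \<in> lam)"
    using assms unfolding partitions_def by (rule CollectD)
  show "lam \<subseteq> {a. length a = n}" "finite lam" "card lam = d" using C by simp_all
  show "\<And>a y. a \<in> lam \<Longrightarrow> vle y a \<Longrightarrow> y \<in> lam" using C by blast
qed

lemma partI: assumes "lam \<subseteq> {a. length a = n}" "finite lam" "card lam = d"
    "\<And>a y. a \<in> lam \<Longrightarrow> vle y a \<Longrightarrow> y \<in> lam"
  shows "lam \<in> partitions n d"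
  unfolding partitions_def mem_Collect_eq using assms by blast

lemma ycount_Cfg: "ycount k (k+1+e) = card (Cfg k e)"
proof -
  define P where "P = {lam \<in> partitions k (k+1+e). emb_dim lam = k}"
  define f where "f = (\<lambda>lam::nat list set. {a\<in>lam. 2 \<le> sum_list a})"
  define g where "g = (\<lambda>E. E \<union> Low k)"
  have LowP: "Low k \<subseteq> lam" if "lam \<in> P" for lam
  proof -
    from that have lamp: "lam \<in> partitions k (k+1+e)" and ed: "emb_dim lam = k" by (simp_all add: P_def)
    note lp = partD[OF lamp]
    have s: "{a\<in>lam. sum_list a = 1} \<subseteq> U k" using lp(1) by (auto simp: U_def)
    have "{a\<in>lam. sum_list a = 1} = U k"
      by (rule card_subset_eq[OF finite_U s]) (use ed in \<open>simp add: emb_dim_def card_U\<close>)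
    then have "U k \<subseteq> lam" by auto
    moreover have "replicate k 0 \<in> lam"
    proof -
      have "lam \<noteq> {}" using lp(3) by auto
      then obtain a where "a \<in> lam" by auto
      moreover have "vle (replicate k 0) a" using lp(1) \<open>a\<in>lam\<close> by (auto simp: vle_def)
      ultimately show ?thesis using lp(4) by blast
    qed
    ultimately show ?thesis by (simp add: Low_eq)
  qed
  have disj: "E \<inter> Low k = {}" if "\<forall>a\<in>E. 2 \<le> sum_list a" for E
    using that by (auto simp: Low_def)
  have "bij_betw f P (Cfg k e)"
  proof (rule bij_betw_byWitness[where f'=g])
    show "\<forall>lam\<in>P. g (f lam) = lam"
    proof
      fix lam assume "lam \<in> P"
      then have "lam \<subseteq> {a. length a = k}" using partD(1)[of lam k "k+1+e"] by (simp add: P_def)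
      then show "g (f lam) = lam" using LowP[OF \<open>lam\<in>P\<close>] by (auto simp: f_def g_def Low_def)
    qed
    show "\<forall>E\<in>Cfg k e. f (g E) = E"
    proof
      fix E assume "E \<in> Cfg k e"
      note Ep = CfgD[OF this]
      show "f (g E) = E" using Ep(4) by (auto simp: f_def g_def Low_def)
    qed
    show "f ` P \<subseteq> Cfg k e"
    proof
      fix E assume "E \<in> f ` P"
      then obtain lam where lam: "lam \<in> P" "E = f lam" by auto
      then have lamp: "lam \<in> partitions k (k+1+e)" by (simp add: P_def)
      note lp = partD[OF lamp]
      have "lam = E \<union> Low k" using lam LowP[OF lam(1)] lp(1) by (auto simp: f_def Low_def)
      moreover have "E \<inter> Low k = {}" using disj[of E] lam(2) by (auto simp: f_def)
      moreover have "finite E" using lp(2) lam(2) by (auto simp: f_def)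
      ultimately have "card lam = card E + Suc k"
        by (simp add: card_Un_disjoint finite_Low card_Low)
      then have "card E = e" using lp(3) by simp
      show "E \<in> Cfg k e"
      proof (rule CfgI)
        show "finite E" "card E = e" by fact+
        show "\<And>a. a \<in> E \<Longrightarrow> length a = k" using lp(1) lam(2) by (auto simp: f_def)
        show "\<And>a. a \<in> E \<Longrightarrow> 2 \<le> sum_list a" using lam(2) by (auto simp: f_def)
        show "\<And>a y. a \<in> E \<Longrightarrow> vle y a \<Longrightarrow> 2 \<le> sum_list y \<Longrightarrow> y \<in> E"
        proof -
          fix a y assume "a \<in> E" "vle y a" "2 \<le> sum_list y"
          then have "y \<in> lam" using lp(4) lam(2) by (auto simp: f_def)
          then show "y \<in> E" using \<open>2 \<le> sum_list y\<close> lam(2) by (simp add: f_def)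
        qed
      qed
    qed
    show "g ` Cfg k e \<subseteq> P"
    proof
      fix lam assume "lam \<in> g ` Cfg k e"
      then obtain E where E: "E \<in> Cfg k e" "lam = E \<union> Low k" by (auto simp: g_def)
      note Ep = CfgD[OF E(1)]
      have c: "card lam = k+1+e" using E(2) disj[of E] Ep
        by (simp add: card_Un_disjoint finite_Low card_Low)
      have sub: "lam \<subseteq> {a. length a = k}" using E(2) Ep(3) by (auto simp: Low_def)
      have dc: "y \<in> lam" if "a \<in> lam" "vle y a" for a y
      proof -
        have ly: "length y = k" using sub that by (auto simp: vle_def)
        show "y \<in> lam"
        proof (cases "2 \<le> sum_list y")
          case True
          then have "a \<notin> Low k" using vle_sum[OF \<open>vle y a\<close>] by (auto simp: Low_def)
          then have "a \<in> E" using \<open>a\<in>lam\<close> E(2) by auto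
          then show ?thesis using Ep(5)[OF _ \<open>vle y a\<close> True] E(2) by auto
        next
          case False
          then show ?thesis using ly E(2) by (auto simp: Low_def)
        qed
      qed
      have "{a\<in>lam. sum_list a = 1} = U k" using E(2) Ep(4) by (force simp: U_def Low_def)
      then have "emb_dim lam = k" by (simp add: emb_dim_def card_U)
      moreover have "lam \<in> partitions k (k+1+e)"
        by (rule partI[OF sub _ c dc]) (simp add: E(2) Ep(1) finite_Low)
      ultimately show "lam \<in> P" by (simp add: P_def)
    qed
  qed
  then show ?thesis unfolding ycount_def P_def[symmetric] by (rule bij_betw_same_card)
qed

lemma Cfg_bound: assumes "E \<in> Cfg k e" "a \<in> E" "i < k" shows "a!i \<le> e+1"
proof (rule ccontr)
  assume "\<not> a!i \<le> e+1"
  define pt where "pt = (\<lambda>c::nat. map (\<lambda>t. if t = i then c else 0) [0..<k])"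
  note Ep = CfgD[OF assms(1)]
  have la: "length a = k" using Ep(3) assms(2) .
  have "pt ` {2..a!i} \<subseteq> E"
  proof
    fix y assume "y \<in> pt ` {2..a!i}"
    then obtain c where c: "c \<in> {2..a!i}" "y = pt c" by auto
    have "vle y a" using c la assms(3) by (auto simp: vle_def pt_def)
    moreover have "sum_list y = c"
    proof -
      have "sum_list y = (\<Sum>t<k. if t = i then c else 0)" by (simp add: c pt_def sum_map_upt)
      also have "\<dots> = c" using assms(3) by (simp add: sum.delta)
      finally show ?thesis .
    qed
    ultimately show "y \<in> E" using Ep(5)[OF assms(2)] c by auto
  qed
  moreover have "inj_on pt {2..a!i}"
  proof
    fix c d assume "c \<in> {2..a!i}" "d \<in> {2..a!i}" "pt c = pt d"
    then have "pt c ! i = pt d ! i" by simp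
    then show "c = d" using assms(3) by (simp add: pt_def)
  qed
  ultimately have "card {2..a!i} \<le> card E"
  proof -
    assume "pt ` {2..a!i} \<subseteq> E" "inj_on pt {2..a!i}"
    then have "card (pt ` {2..a!i}) \<le> card E" using Ep(1) by (intro card_mono) auto
    then show ?thesis using card_image[OF \<open>inj_on pt {2..a!i}\<close>] by simp
  qed
  then show False using Ep(2) \<open>\<not> a!i \<le> e+1\<close> by simp
qed

lemma finite_Cfg: "finite (Cfg k e)"
proof -
  have "Cfg k e \<subseteq> Pow {a. set a \<subseteq> {0..e+1} \<and> length a = k}"
  proof
    fix E assume E: "E \<in> Cfg k e"
    show "E \<in> Pow {a. set a \<subseteq> {0..e+1} \<and> length a = k}"
    proof (rule PowI, rule subsetI)
      fix a assume "a \<in> E"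
      then have "length a = k" using CfgD(3)[OF E] by blast
      moreover have "set a \<subseteq> {0..e+1}"
      proof
        fix x assume "x \<in> set a"
        then obtain i where "i < length a" "x = a!i" by (auto simp: in_set_conv_nth)
        then show "x \<in> {0..e+1}" using Cfg_bound[OF E \<open>a\<in>E\<close>] \<open>length a = k\<close> by auto
      qed
      ultimately show "a \<in> {a. set a \<subseteq> {0..e+1} \<and> length a = k}" by simp
    qed
  qed
  moreover have "finite (Pow {a. set a \<subseteq> {0..e+1} \<and> length a = (k::nat)})"
    using finite_lists_length_eq[of "{0..e+1}" k] by simp
  ultimately show ?thesis by (rule finite_subset)
qed

definition del :: "nat \<Rightarrow> nat list \<Rightarrow> nat list" where
  "del m a = map (\<lambda>i. if i < m then a!i else a!(Suc i)) [0..<length a - 1]"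
definition ins :: "nat \<Rightarrow> nat list \<Rightarrow> nat list" where
  "ins m b = map (\<lambda>i. if i < m then b!i else if i = m then 0 else b!(i-1)) [0..<Suc (length b)]"

lemma del_len[simp]: "length (del m a) = length a - 1" by (simp add: del_def)
lemma del_nth: "i < length a - 1 \<Longrightarrow> del m a ! i = (if i < m then a!i else a!(Suc i))"
  by (simp add: del_def)
lemma ins_len[simp]: "length (ins m b) = Suc (length b)" unfolding ins_def by (simp del: upt_Suc)
lemma ins_nth: "i < Suc (length b) \<Longrightarrow> ins m b ! i = (if i < m then b!i else if i = m then 0 else b!(i-1))"
  unfolding ins_def by (simp del: upt_Suc)

lemma ins_del: assumes "a!m = 0" "m < length a" shows "ins m (del m a) = a"
proof (rule nth_equalityI)
  show "length (ins m (del m a)) = length a" using assms by simp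
  fix i assume "i < length (ins m (del m a))"
  then have i: "i < length a" using assms by simp
  show "ins m (del m a) ! i = a ! i"
    using i assms by (auto simp: ins_nth del_nth)
qed

lemma del_ins: assumes "m \<le> length b" shows "del m (ins m b) = b"
proof (rule nth_equalityI)
  show "length (del m (ins m b)) = length b" by simp
  fix i assume "i < length (del m (ins m b))"
  then have i: "i < length b" by simp
  show "del m (ins m b) ! i = b ! i"
    using i assms by (auto simp: ins_nth del_nth)
qed

lemma ins_eq: assumes "m \<le> length b" shows "ins m b = take m b @ 0 # drop m b"
proof (rule nth_equalityI)
  show "length (ins m b) = length (take m b @ 0 # drop m b)" using assms by simp
  fix i assume "i < length (ins m b)"
  then show "ins m b ! i = (take m b @ 0 # drop m b) ! i"
    using assms by (auto simp: ins_nth nth_append nth_Cons' min_def)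
qed

lemma ins_sum: "m \<le> length b \<Longrightarrow> sum_list (ins m b) = sum_list b"
proof -
  assume "m \<le> length b"
  then have "sum_list (ins m b) = sum_list (take m b) + sum_list (drop m b)" by (simp add: ins_eq)
  also have "\<dots> = sum_list b" by (metis append_take_drop_id sum_list_append)
  finally show ?thesis .
qed

lemma del_sum: "a!m = 0 \<Longrightarrow> m < length a \<Longrightarrow> sum_list (del m a) = sum_list a"
  by (metis ins_del ins_sum del_len less_Suc_eq_le Suc_pred' gr_implies_not0 not_less0 le_simps(2) le_less_trans linorder_not_le)

lemma vle_ins: "vle y b \<Longrightarrow> m \<le> length b \<Longrightarrow> vle (ins m y) (ins m b)"
  unfolding vle_def by (auto simp: ins_nth)

lemma vle_ins_inv: assumes "vle y (ins m b)" "m \<le> length b" shows "y!m = 0" "vle (del m y) b"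
proof -
  have ly: "length y = Suc (length b)" using assms(1) by (simp add: vle_def)
  have "y!m \<le> ins m b ! m" using assms unfolding vle_def by simp
  then show "y!m = 0" using assms(2) by (simp add: ins_nth)
  show "vle (del m y) b" unfolding vle_def
  proof (intro conjI allI impI)
    show "length (del m y) = length b" using ly by simp
    fix i assume "i < length b"
    then have "y ! (if i < m then i else Suc i) \<le> ins m b ! (if i < m then i else Suc i)"
      using assms(1) unfolding vle_def by auto
    then show "del m y ! i \<le> b ! i" using \<open>i < length b\<close> ly
      by (auto simp: del_nth ins_nth split: if_splits)
  qed
qed

definition used :: "nat list set \<Rightarrow> nat \<Rightarrow> bool" where
  "used E i = (\<exists>a\<in>E. 0 < a!i)"

definition Wset :: "nat \<Rightarrow> nat \<Rightarrow> nat \<Rightarrow> nat list set set" where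
  "Wset k m e = {E\<in>Cfg k e. \<forall>i. m \<le> i \<longrightarrow> i < k \<longrightarrow> used E i}"

lemma finite_Wset: "finite (Wset k m e)"
  unfolding Wset_def using finite_Cfg by simp

lemma del_bij: assumes "m \<le> k"
  shows "card {E \<in> Wset (Suc k) (Suc m) e. \<not> used E m} = card (Wset k m e)"
proof -
  define S where "S = {E \<in> Wset (Suc k) (Suc m) e. \<not> used E m}"
  have S0: "a \<in> E \<Longrightarrow> a!m = 0" if "E \<in> S" for E a
    using that unfolding S_def used_def by auto
  have SC: "E \<in> Cfg (Suc k) e" if "E \<in> S" for E using that unfolding S_def Wset_def by auto
  have SU: "used E i" if "E \<in> S" "Suc m \<le> i" "i < Suc k" for E i
    using that unfolding S_def Wset_def by auto
  have "bij_betw (\<lambda>E. del m ` E) S (Wset k m e)"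
  proof (rule bij_betw_byWitness[where f'="\<lambda>E. ins m ` E"])
    show "\<forall>E\<in>S. ins m ` del m ` E = E"
    proof
      fix E assume E: "E \<in> S"
      have "ins m (del m a) = a" if "a \<in> E" for a
        using S0[OF E that] CfgD(3)[OF SC[OF E] that] assms by (intro ins_del) auto
      then show "ins m ` del m ` E = E" by (simp add: image_image)
    qed
    show "\<forall>E\<in>Wset k m e. del m ` ins m ` E = E"
    proof
      fix E assume E: "E \<in> Wset k m e"
      then have "E \<in> Cfg k e" by (simp add: Wset_def)
      have "del m (ins m b) = b" if "b \<in> E" for b
        using CfgD(3)[OF \<open>E \<in> Cfg k e\<close> that] assms by (intro del_ins) auto
      then show "del m ` ins m ` E = E" by (simp add: image_image)
    qed
    show "(\<lambda>E. del m ` E) ` S \<subseteq> Wset k m e"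
    proof
      fix E' assume "E' \<in> (\<lambda>E. del m ` E) ` S"
      then obtain E where E: "E \<in> S" "E' = del m ` E" by auto
      note Ep = CfgD[OF SC[OF E(1)]]
      have la: "length a = Suc k" if "a \<in> E" for a using Ep(3) that .
      have id: "ins m (del m a) = a" if "a \<in> E" for a
        using S0[OF E(1) that] la[OF that] assms by (intro ins_del) auto
      have inj: "inj_on (del m) E" by (metis id inj_onI)
      have Cf: "E' \<in> Cfg k e"
      proof (rule CfgI)
        show "finite E'" using Ep(1) E(2) by simp
        show "card E' = e" using Ep(2) E(2) card_image[OF inj] by simp
        show "\<And>a. a \<in> E' \<Longrightarrow> length a = k" using E(2) la by auto
        show "\<And>a. a \<in> E' \<Longrightarrow> 2 \<le> sum_list a"
          using E(2) Ep(4) S0[OF E(1)] la assms by (auto simp: del_sum)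
        show "y \<in> E'" if h: "a' \<in> E'" "vle y a'" "2 \<le> sum_list y" for a' y
        proof -
          obtain a where a: "a \<in> E" "a' = del m a" using h(1) E(2) by auto
          have ly: "m \<le> length y" using h(2) a la[OF a(1)] assms by (simp add: vle_def)
          have m1: "m \<le> length (del m a)" using la[OF a(1)] assms by simp
          have "vle (ins m y) (ins m (del m a))" using vle_ins[OF _ m1] h(2) a(2) by simp
          then have "vle (ins m y) a" using id[OF a(1)] by simp
          moreover have "2 \<le> sum_list (ins m y)" using ins_sum[OF ly] h(3) by simp
          ultimately have "ins m y \<in> E" using Ep(5)[OF a(1)] by blast
          then show "y \<in> E'" using E(2) del_ins[OF ly] by force
        qed
      qed
      have "used E' i" if "m \<le> i" "i < k" for i
      proof -
        from SU[OF E(1), of "Suc i"] that obtain a where a: "a \<in> E" "0 < a!(Suc i)"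
          unfolding used_def by auto
        then have "del m a ! i = a!(Suc i)" using that la[OF a(1)] by (simp add: del_nth)
        then show ?thesis unfolding used_def using a E(2) by force
      qed
      then show "E' \<in> Wset k m e" using Cf by (simp add: Wset_def)
    qed
    show "(\<lambda>E. ins m ` E) ` Wset k m e \<subseteq> S"
    proof
      fix E' assume "E' \<in> (\<lambda>E. ins m ` E) ` Wset k m e"
      then obtain E where E: "E \<in> Wset k m e" "E' = ins m ` E" by auto
      then have EC: "E \<in> Cfg k e" by (simp add: Wset_def)
      note Ep = CfgD[OF EC]
      have lb: "length b = k" if "b \<in> E" for b using Ep(3) that .
      have id: "del m (ins m b) = b" if "b \<in> E" for b
        using lb[OF that] assms by (intro del_ins) auto
      have inj: "inj_on (ins m) E" by (metis id inj_onI)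
      have Cf: "E' \<in> Cfg (Suc k) e"
      proof (rule CfgI)
        show "finite E'" using Ep(1) E(2) by simp
        show "card E' = e" using Ep(2) E(2) card_image[OF inj] by simp
        show "\<And>a. a \<in> E' \<Longrightarrow> length a = Suc k" using E(2) lb by auto
        show "\<And>a. a \<in> E' \<Longrightarrow> 2 \<le> sum_list a"
          using E(2) Ep(4) lb assms by (auto simp: ins_sum)
        show "y \<in> E'" if h: "a' \<in> E'" "vle y a'" "2 \<le> sum_list y" for a' y
        proof -
          obtain b where b: "b \<in> E" "a' = ins m b" using h(1) E(2) by auto
          have mb: "m \<le> length b" using lb[OF b(1)] assms by simp
          have y0: "y!m = 0" and yv: "vle (del m y) b"
            using vle_ins_inv[OF _ mb] h(2) b(2) by auto
          have ly: "length y = Suc k" using h(2) b(2) lb[OF b(1)] by (simp add: vle_def)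
          have yi: "ins m (del m y) = y" using y0 ly assms by (intro ins_del) auto
          have "sum_list (del m y) = sum_list y" using y0 ly assms by (intro del_sum) auto
          then have "del m y \<in> E" using Ep(5)[OF b(1) yv] h(3) by simp
          then show "y \<in> E'" using E(2) yi by force
        qed
      qed
      have nu: "\<not> used E' m"
        unfolding used_def using E(2) lb assms by (auto simp: ins_nth)
      have "used E' i" if h2: "Suc m \<le> i" "i < Suc k" for i
      proof -
        obtain i' where i': "i = Suc i'" using h2 by (cases i) auto
        from E(1) h2 i' obtain b where b: "b \<in> E" "0 < b!i'"
          unfolding Wset_def used_def by auto
        then have "ins m b ! i = b!i'" using h2 i' lb[OF b(1)] by (simp add: ins_nth)
        then show ?thesis unfolding used_def using b E(2) by force
      qed
      then show "E' \<in> S" using Cf nu by (simp add: S_def Wset_def)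
    qed
  qed
  then show ?thesis unfolding S_def by (rule bij_betw_same_card)
qed

lemma W_rec: assumes "m \<le> k"
  shows "card (Wset (Suc k) (Suc m) e) = card (Wset (Suc k) m e) + card (Wset k m e)"
proof -
  have split: "Wset (Suc k) (Suc m) e = {E \<in> Wset (Suc k) (Suc m) e. used E m} \<union> {E \<in> Wset (Suc k) (Suc m) e. \<not> used E m}"
    by auto
  have eq: "{E \<in> Wset (Suc k) (Suc m) e. used E m} = Wset (Suc k) m e"
    unfolding Wset_def using assms by (auto simp: Suc_le_eq) (metis le_neq_implies_less)
  have "card (Wset (Suc k) (Suc m) e) = card {E \<in> Wset (Suc k) (Suc m) e. used E m} + card {E \<in> Wset (Suc k) (Suc m) e. \<not> used E m}"
    by (subst split, rule card_Un_disjoint) (auto intro: finite_subset[OF _ finite_Wset])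
  then show ?thesis using eq del_bij[OF assms] by simp
qed

lemma fdiff:
  fixes V :: "nat \<Rightarrow> nat \<Rightarrow> int"
  assumes rec: "\<And>f r. V f (Suc r) = V (Suc f) r - V f r"
  shows "V f r = (\<Sum>j\<le>r. (-1)^(r+j) * of_nat (r choose j) * V (f+j) 0)"
proof (induction r arbitrary: f)
  case 0 then show ?case by simp
next
  case (Suc r)
  define S1 where "S1 = (\<Sum>j\<le>r. (-1)^(r+j) * of_nat (r choose j) * V (f + Suc j) 0)"
  define S0 where "S0 = (\<Sum>j\<le>r. (-1)^(r+j) * of_nat (r choose j) * V (f+j) 0)"
  define T where "T = (\<Sum>j\<le>r. (-1)^(r+j) * of_nat (r choose Suc j) * V (f + Suc j) 0)"
  have "V f (Suc r) = S1 - S0" using rec Suc.IH[of "Suc f"] Suc.IH[of f] by (simp add: S1_def S0_def)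
  have "(\<Sum>j\<le>Suc r. (-1)^(Suc r+j) * of_nat (Suc r choose j) * V (f+j) 0)
      = (-1)^(Suc r) * V f 0 + (\<Sum>j\<le>r. (-1)^(Suc r + Suc j) * of_nat (Suc r choose Suc j) * V (f + Suc j) 0)"
    by (subst sum.atMost_Suc_shift) simp
  also have "(\<Sum>j\<le>r. (-1)^(Suc r + Suc j) * of_nat (Suc r choose Suc j) * V (f + Suc j) 0) = S1 + T"
    unfolding S1_def T_def sum.distrib[symmetric] by (rule sum.cong) (simp_all add: algebra_simps)
  finally have R: "(\<Sum>j\<le>Suc r. (-1)^(Suc r+j) * of_nat (Suc r choose j) * V (f+j) 0) = (-1)^(Suc r) * V f 0 + S1 + T"
    by simp
  have "- S0 = (\<Sum>j\<le>Suc r. (-1)^(Suc r + j) * of_nat (r choose j) * V (f+j) 0)"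
    unfolding S0_def by (simp add: sum_negf[symmetric])
  also have "\<dots> = (-1)^(Suc r) * V f 0 + T"
    by (subst sum.atMost_Suc_shift) (simp add: T_def)
  finally show ?case using R \<open>V f (Suc r) = S1 - S0\<close> by simp
qed

lemma W_formula:
  "int (card (Wset r 0 e)) = (\<Sum>j\<le>r. (-1)^(r+j) * of_nat (r choose j) * int (card (Cfg j e)))"
proof -
  define V where "V = (\<lambda>f r. int (card (Wset (f+r) f e)))"
  have rec: "V f (Suc r) = V (Suc f) r - V f r" for f r
    using W_rec[of f "f+r" e] by (simp add: V_def)
  have W0: "Wset j j e = Cfg j e" for j by (auto simp: Wset_def)
  show ?thesis using fdiff[of V 0 r, OF rec] by (simp add: V_def W0)
qed

lemma swap_tri:
  fixes g :: "nat \<Rightarrow> nat \<Rightarrow> int"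
  shows "(\<Sum>h\<le>n. \<Sum>j\<le>h. g j (h-j)) = (\<Sum>j\<le>n. \<Sum>i\<le>n-j. g j i)"
proof (induction n)
  case 0 then show ?case by simp
next
  case (Suc n)
  have "(\<Sum>j\<le>Suc n. \<Sum>i\<le>Suc n-j. g j i) = (\<Sum>j\<le>n. \<Sum>i\<le>Suc n-j. g j i) + g (Suc n) 0"
    by simp
  also have "(\<Sum>j\<le>n. \<Sum>i\<le>Suc n-j. g j i) = (\<Sum>j\<le>n. (\<Sum>i\<le>n-j. g j i) + g j (Suc n - j))"
    by (rule sum.cong) (simp_all add: Suc_diff_le)
  also have "\<dots> = (\<Sum>j\<le>n. \<Sum>i\<le>n-j. g j i) + (\<Sum>j\<le>n. g j (Suc n - j))"
    by (simp add: sum.distrib)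
  finally show ?case using Suc.IH by simp
qed

lemma neg1_pow2: "(-1::int)^(d + 2*j) = (-1)^d"
  by (induction j) auto

lemma neg1_pow: "j \<le> h \<Longrightarrow> (-1::int)^(h+j) = (-1)^(h-j)"
proof -
  assume "j \<le> h"
  then have "h + j = (h - j) + 2*j" by simp
  then show ?thesis using neg1_pow2[of "h-j" j] by (simp add: add.commute)
qed

lemma altA: "(\<Sum>i\<le>m. (-1)^i * int (Suc N choose i)) = (-1)^m * int (N choose m)"
proof (induction m)
  case 0 then show ?case by simp
next
  case (Suc m)
  then show ?case by (simp add: algebra_simps)
qed

lemma altB: "(\<Sum>i\<le>Suc m. (-1)^i * int i * int (Suc (Suc N) choose i)) = (-1)^(Suc m) * int (Suc (Suc N)) * int (N choose m)"
proof (induction m)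
  case 0 then show ?case by simp
next
  case (Suc m)
  have e1: "int (Suc (Suc m)) * int (Suc (Suc N) choose Suc (Suc m)) = int (Suc (Suc N)) * int (Suc N choose Suc m)"
    using Suc_times_binomial[of "Suc m" "Suc N"] by (metis of_nat_mult)
  have e2: "int (Suc N choose Suc m) = int (N choose m) + int (N choose Suc m)" by simp
  have "(\<Sum>i\<le>Suc (Suc m). (-1)^i * int i * int (Suc (Suc N) choose i))
     = (-1)^(Suc m) * int (Suc (Suc N)) * int (N choose m) + (-1)^(Suc (Suc m)) * (int (Suc (Suc m)) * int (Suc (Suc N) choose Suc (Suc m)))"
    using Suc.IH by (simp add: algebra_simps)
  also have "\<dots> = (-1)^(Suc (Suc m)) * int (Suc (Suc N)) * int (N choose Suc m)"
    unfolding e1 e2 by (simp add: algebra_simps)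
  finally show ?case .
qed

lemma coef1: "j \<le> n \<Longrightarrow> (\<Sum>i\<le>n-j. (-1)^i * int (Suc (Suc n) choose i)) = (-1)^(n+j) * int (Suc n choose Suc j)"
proof -
  assume j: "j \<le> n"
  have "(\<Sum>i\<le>n-j. (-1)^i * int (Suc (Suc n) choose i)) = (-1)^(n-j) * int (Suc n choose (n-j))"
    by (rule altA)
  also have "Suc n choose (n-j) = Suc n choose Suc j"
    using binomial_symmetric[of "Suc j" "Suc n"] j by simp
  finally show ?thesis using neg1_pow[OF j] by simp
qed

lemma coef2: "j \<le> n \<Longrightarrow> (\<Sum>i\<le>n-j. int (i+j+1) * ((-1)^i * int (Suc (Suc n) choose i)))
   = (-1)^(n+j) * (int (n+1) * int (Suc n choose Suc j) + int (n choose Suc j))"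
proof -
  assume j: "j \<le> n"
  have split: "(\<Sum>i\<le>n-j. int (i+j+1) * ((-1)^i * int (Suc (Suc n) choose i)))
    = int (j+1) * (\<Sum>i\<le>n-j. (-1)^i * int (Suc (Suc n) choose i)) + (\<Sum>i\<le>n-j. (-1)^i * int i * int (Suc (Suc n) choose i))"
    by (simp add: sum_distrib_left sum.distrib[symmetric] algebra_simps)
  show ?thesis
  proof (cases "j = n")
    case True
    then show ?thesis using split by simp
  next
    case False
    then obtain m where m: "n - j = Suc m" using j by (metis Suc_diff_Suc le_neq_implies_less)
    have B: "(\<Sum>i\<le>n-j. (-1)^i * int i * int (Suc (Suc n) choose i)) = (-1)^(n-j) * int (Suc (Suc n)) * int (n choose m)"
      unfolding m by (rule altB)
    have nm: "n choose m = n choose Suc j"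
    proof -
      have mm: "m = n - Suc j" using m by arith
      show ?thesis using binomial_symmetric[of "Suc j" n] j False unfolding mm by simp
    qed
    have ab: "int (n - j) * int (Suc n choose Suc j) = int (Suc n) * int (n choose Suc j)"
      using binomial_absorb_comp[of "Suc n" "Suc j"] by (metis diff_Suc_Suc diff_Suc_1 of_nat_mult)
    have nj: "int (n - j) = int n - int j" using j by simp
    have "(\<Sum>i\<le>n-j. int (i+j+1) * ((-1)^i * int (Suc (Suc n) choose i)))
       = (-1)^(n+j) * (int (j+1) * int (Suc n choose Suc j) + int (Suc (Suc n)) * int (n choose Suc j))"
      using split coef1[OF j] B nm neg1_pow[OF j] by (simp add: algebra_simps)
    also have "\<dots> = (-1)^(n+j) * (int (n+1) * int (Suc n choose Suc j) + int (n choose Suc j))"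
      using ab unfolding nj by (simp add: algebra_simps)
    finally show ?thesis .
  qed
qed

lemma alg_main:
  fixes y :: "nat \<Rightarrow> int" and n :: nat
  assumes y0: "y 0 = 0"
  defines "G \<equiv> \<lambda>h. (\<Sum>j=0..h. (-1)^(h+j) * int ((n+2) choose (h-j)) * y (j+1))"
  defines "D \<equiv> \<lambda>r. (\<Sum>j\<le>r. (-1)^(r+j) * int (r choose j) * y j)"
  shows "(\<Sum>i=0..n. G i) = D (n+1)"
    and "(\<Sum>i=0..n. int (i+1) * G i) = int (n+1) * D (n+1) - D n"
proof -
  define g where "g = (\<lambda>j i. (-1)^i * int ((n+2) choose i) * y (j+1))"
  have G: "G h = (\<Sum>j\<le>h. g j (h-j))" for h
    unfolding G_def g_def atLeast0AtMost by (rule sum.cong) (simp_all add: neg1_pow)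
  have D1: "D (n+1) = (\<Sum>j\<le>n. (-1)^(n+j) * int (Suc n choose Suc j) * y (Suc j))"
    unfolding D_def by (simp add: sum.atMost_Suc_shift y0 del: sum.atMost_Suc)
  have Dn: "D n = (\<Sum>j\<le>n. - ((-1)^(n+j) * int (n choose Suc j) * y (Suc j)))"
  proof -
    have "D n = (\<Sum>j\<le>Suc n. (-1)^(n+j) * int (n choose j) * y j)"
      unfolding D_def by simp
    also have "\<dots> = (\<Sum>j\<le>n. - ((-1)^(n+j) * int (n choose Suc j) * y (Suc j)))"
      by (simp add: sum.atMost_Suc_shift y0 del: sum.atMost_Suc)
    finally show ?thesis .
  qed
  show "(\<Sum>i=0..n. G i) = D (n+1)"
  proof -
    have "(\<Sum>i=0..n. G i) = (\<Sum>j\<le>n. \<Sum>i\<le>n-j. g j i)"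
      unfolding atLeast0AtMost G by (rule swap_tri)
    also have "\<dots> = (\<Sum>j\<le>n. (\<Sum>i\<le>n-j. (-1)^i * int (Suc (Suc n) choose i)) * y (Suc j))"
      unfolding g_def by (simp add: sum_distrib_right)
    also have "\<dots> = D (n+1)"
      unfolding D1 by (rule sum.cong) (simp_all add: coef1)
    finally show ?thesis .
  qed
  show "(\<Sum>i=0..n. int (i+1) * G i) = int (n+1) * D (n+1) - D n"
  proof -
    define g2 where "g2 = (\<lambda>j i. int (i+j+1) * g j i)"
    have G2: "int (h+1) * G h = (\<Sum>j\<le>h. g2 j (h-j))" for h
      unfolding G g2_def sum_distrib_left by (rule sum.cong) simp_all
    have "(\<Sum>i=0..n. int (i+1) * G i) = (\<Sum>j\<le>n. \<Sum>i\<le>n-j. g2 j i)"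
      unfolding atLeast0AtMost G2 by (rule swap_tri)
    also have "\<dots> = (\<Sum>j\<le>n. (\<Sum>i\<le>n-j. int (i+j+1) * ((-1)^i * int (Suc (Suc n) choose i))) * y (Suc j))"
      unfolding g2_def g_def by (simp add: sum_distrib_right mult.assoc)
    also have "\<dots> = (\<Sum>j\<le>n. (-1)^(n+j) * (int (n+1) * int (Suc n choose Suc j) + int (n choose Suc j)) * y (Suc j))"
    proof (rule sum.cong[OF refl])
      fix j assume "j \<in> {..n}"
      then have jn: "j \<le> n" by simp
      show "(\<Sum>i\<le>n-j. int (i+j+1) * ((-1)^i * int (Suc (Suc n) choose i))) * y (Suc j)
         = (-1)^(n+j) * (int (n+1) * int (Suc n choose Suc j) + int (n choose Suc j)) * y (Suc j)"
        by (simp only: coef2[OF jn])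
    qed
    also have "\<dots> = (\<Sum>j\<le>n. int (n+1) * ((-1)^(n+j) * int (Suc n choose Suc j) * y (Suc j)) - - ((-1)^(n+j) * int (n choose Suc j) * y (Suc j)))"
      by (rule sum.cong[OF refl]) (simp add: algebra_simps del: binomial_Suc_Suc)
    also have "\<dots> = int (n+1) * D (n+1) - D n"
      unfolding D1 Dn by (simp only: sum_distrib_left sum_subtractf)
    finally show ?thesis .
  qed
qed

definition Edg :: "'a set \<Rightarrow> 'a set set" where "Edg A = {X. X \<subseteq> A \<and> (card X = 1 \<or> card X = 2)}"
definition Gr :: "'a set \<Rightarrow> nat \<Rightarrow> 'a set set set" where
  "Gr A e = {F. finite F \<and> F \<subseteq> Edg A \<and> card F = e \<and> \<Union>F = A}"

lemma GrD: assumes "F \<in> Gr A e" shows "finite F" "F \<subseteq> Edg A" "card F = e" "\<Union>F = A"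
  using assms unfolding Gr_def by auto

lemma GrI: "finite F \<Longrightarrow> F \<subseteq> Edg A \<Longrightarrow> card F = e \<Longrightarrow> \<Union>F = A \<Longrightarrow> F \<in> Gr A e"
  unfolding Gr_def by auto

lemma Edg_le2: "X \<in> Edg A \<Longrightarrow> card X \<le> 2" unfolding Edg_def by auto

lemma Edg_mono: "A \<subseteq> B \<Longrightarrow> Edg A \<subseteq> Edg B" unfolding Edg_def by auto

lemma finite_Gr: "finite A \<Longrightarrow> finite (Gr A e)"
proof -
  assume "finite A"
  have "Gr A e \<subseteq> Pow (Pow A)" unfolding Gr_def Edg_def by auto
  then show ?thesis using \<open>finite A\<close> by (meson finite_Pow_iff finite_subset)
qed

lemma cover_bound: assumes "finite F" "\<And>X. X \<in> F \<Longrightarrow> card X \<le> 2" shows "card (\<Union>F) \<le> 2 * card F"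
proof -
  have "card (\<Union>F) \<le> sum card F" by (rule card_Union_le_sum_card)
  also have "\<dots> \<le> sum (\<lambda>_. 2) F" using assms(2) by (rule sum_mono)
  finally show ?thesis by simp
qed

lemma Gr_cover: "F \<in> Gr A e \<Longrightarrow> card A \<le> 2 * e"
  using cover_bound[of F] GrD[of F A e] Edg_le2 by blast

lemma dfact_step: "dfact (2*e+1) = (2*e+1) * dfact (2*e-1)"
  by (cases e) (simp_all add: numeral_2_eq_2)

lemma pm: "finite A \<Longrightarrow> card A = 2*e \<Longrightarrow> card (Gr A e) = dfact (2*e - 1)"
proof (induction e arbitrary: A)
  case 0
  then have "A = {}" by simp
  have "Gr A 0 = {{}}"
  proof
    show "Gr A 0 \<subseteq> {{}}" by (auto simp: Gr_def)
    show "{{}} \<subseteq> Gr A 0" using \<open>A = {}\<close> by (auto simp: Gr_def)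
  qed
  then show ?case by simp
next
  case (Suc e)
  have finA: "finite A" and cA: "card A = 2*e+2" using Suc.prems by auto
  then obtain x where x: "x \<in> A" by fastforce
  define Sig where "Sig = Sigma (A - {x}) (\<lambda>y. Gr (A - {x,y}) e)"
  define phi where "phi = (\<lambda>(y::'a, F'::'a set set). insert {x,y} F')"
  have cG: "card (Gr (A - {x,y}) e) = dfact (2*e-1)" if "y \<in> A - {x}" for y
  proof -
    have "card (A - {x,y}) = card A - card {x,y}" using that x finA by (intro card_Diff_subset) auto
    then have "card (A - {x,y}) = 2*e" using that cA by (auto simp: card_insert_if)
    then show ?thesis using Suc.IH[of "A - {x,y}"] finA by simp
  qed
  have cSig: "card Sig = dfact (2 * Suc e - 1)"
  proof -
    have "card Sig = (\<Sum>y\<in>A-{x}. card (Gr (A - {x,y}) e))"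
      unfolding Sig_def using finA by (simp add: finite_Gr)
    also have "\<dots> = (2*e+1) * dfact (2*e-1)" using cG cA x finA by simp
    also have "\<dots> = dfact (2 * Suc e - 1)" using dfact_step[of e] by simp
    finally show ?thesis .
  qed
  have xnot: "x \<notin> \<Union>F'" if "(y,F') \<in> Sig" for y F'
    using that GrD(4)[of F'] by (auto simp: Sig_def)
  have inj: "inj_on phi Sig"
  proof (rule inj_onI)
    fix p q assume p: "p \<in> Sig" and q: "q \<in> Sig" and eq: "phi p = phi q"
    obtain y F' where p': "p = (y,F')" by fastforce
    obtain z F'' where q': "q = (z,F'')" by fastforce
    have n1: "{x,y} \<notin> F'" using xnot[of y F'] p p' by auto
    have n2: "{x,z} \<notin> F''" using xnot[of z F''] q q' by auto
    have "{x,y} \<in> insert {x,z} F''" using eq p' q' by (auto simp: phi_def)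
    then have "{x,y} = {x,z}" using n2 xnot[of z F''] q q' by auto
    then have yz: "y = z" using p p' q q' by (auto simp: Sig_def doubleton_eq_iff)
    have "F' = insert {x,y} F' - {{x,y}}" using n1 by auto
    also have "\<dots> = insert {x,z} F'' - {{x,z}}" using eq p' q' yz by (simp add: phi_def)
    also have "\<dots> = F''" using n2 by auto
    finally show "p = q" using p' q' yz by simp
  qed
  have img: "phi ` Sig = Gr A (Suc e)"
  proof
    show "phi ` Sig \<subseteq> Gr A (Suc e)"
    proof
      fix F assume "F \<in> phi ` Sig"
      then obtain y F' where yF: "(y,F') \<in> Sig" "F = insert {x,y} F'" by (auto simp: phi_def)
      then have y: "y \<in> A" "y \<noteq> x" and G: "F' \<in> Gr (A - {x,y}) e" by (auto simp: Sig_def)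
      note Gp = GrD[OF G]
      have n1: "{x,y} \<notin> F'" using xnot[OF yF(1)] by auto
      show "F \<in> Gr A (Suc e)"
      proof (rule GrI)
        show "finite F" using Gp(1) yF(2) by simp
        show "F \<subseteq> Edg A" using Gp(2) Edg_mono[of "A - {x,y}" A] yF(2) x y by (auto simp: Edg_def)
        show "card F = Suc e" using Gp(1,3) n1 yF(2) by simp
        show "\<Union>F = A" using Gp(4) yF(2) x y by auto
      qed
    qed
    show "Gr A (Suc e) \<subseteq> phi ` Sig"
    proof
      fix F assume F: "F \<in> Gr A (Suc e)"
      note Fp = GrD[OF F]
      obtain X where X: "X \<in> F" "x \<in> X" using Fp(4) x by blast
      define F' where "F' = F - {X}"
      have fF': "finite F'" "card F' = e" using Fp(1,3) X(1) by (simp_all add: F'_def)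
      have c2: "card (\<Union>F') \<le> 2*e"
        using cover_bound[of F'] fF' Fp(2) Edg_le2 by (auto simp: F'_def)
      have XA: "X \<subseteq> A" "card X = 1 \<or> card X = 2" using Fp(2) X(1) by (auto simp: Edg_def)
      have sub1: "A - X \<subseteq> \<Union>F'" using Fp(4) by (auto simp: F'_def)
      have sub2: "\<Union>F' \<subseteq> A" using Fp(4) by (auto simp: F'_def)
      have fX: "finite X" using XA(2) card.infinite by fastforce
      have cAX: "card (A - X) = 2*e + 2 - card X" using cA XA(1) fX by (simp add: card_Diff_subset)
      have finU: "finite (\<Union>F')" using sub2 finA finite_subset by blast
      have "card (A - X) \<le> card (\<Union>F')" using sub1 finU card_mono by blast
      then have cX: "card X = 2" using c2 cAX XA(2) by auto
      have eqU: "\<Union>F' = A - X"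
        using card_subset_eq[OF finU sub1] c2 cAX cX
        by (metis \<open>card (A - X) \<le> card (\<Union>F')\<close> le_antisym diff_add_inverse2 mult_2 add_2_eq_Suc' card_mono finU sub1)
      obtain y where y: "X = {x,y}" "y \<noteq> x" using cX X(2) by (metis card_2_iff insert_commute insertE singletonD)
      have yA: "y \<in> A" using XA(1) y by auto
      have "F' \<in> Gr (A - {x,y}) e"
      proof (rule GrI)
        show "finite F'" "card F' = e" by (fact fF')+
        show "F' \<subseteq> Edg (A - {x,y})"
        proof
          fix Z assume "Z \<in> F'"
          then have "Z \<subseteq> A - {x,y}" using eqU y(1) by auto
          moreover have "Z \<in> Edg A" using Fp(2) \<open>Z\<in>F'\<close> by (auto simp: F'_def)
          ultimately show "Z \<in> Edg (A - {x,y})" by (auto simp: Edg_def)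
        qed
        show "\<Union>F' = A - {x,y}" using eqU y(1) by simp
      qed
      then have "(y,F') \<in> Sig" using yA y(2) by (simp add: Sig_def)
      moreover have "phi (y,F') = F" using X(1) y(1) by (auto simp: phi_def F'_def)
      ultimately show "F \<in> phi ` Sig" by force
    qed
  qed
  show ?case using card_image[OF inj] img cSig by simp
qed

lemma edge_x: assumes "X \<in> Edg A" "x \<in> X" shows "\<exists>t\<in>A. X = {x,t}"
proof -
  have XA: "X \<subseteq> A" "card X = 1 \<or> card X = 2" using assms(1) by (auto simp: Edg_def)
  show ?thesis
  proof (cases "card X = 1")
    case True
    then obtain a where "X = {a}" by (auto simp: card_Suc_eq)
    then show ?thesis using assms(2) XA(1) by auto
  next
    case False
    then have "card X = 2" using XA(2) by simp
    then obtain a b where ab: "X = {a,b}" "a \<noteq> b" by (auto simp: card_2_iff)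
    then show ?thesis using assms(2) XA(1) by auto
  qed
qed

lemma Gr_base: assumes "finite A" "card A = 1" shows "card (Gr A 1) = 1"
proof -
  obtain x where A: "A = {x}" using assms(2) by (auto simp: card_Suc_eq)
  have "Gr A 1 = {{{x}}}"
  proof
    show "{{{x}}} \<subseteq> Gr A 1" using A by (auto simp: Gr_def Edg_def)
    show "Gr A 1 \<subseteq> {{{x}}}"
    proof
      fix F assume F: "F \<in> Gr A 1"
      note Fp = GrD[OF F]
      obtain X where "F = {X}" using Fp(3) by (auto simp: card_Suc_eq)
      then show "F \<in> {{{x}}}" using Fp(4) A by auto
    qed
  qed
  then show ?thesis by simp
qed

lemma pairx_inj: "inj_on (\<lambda>t. {x,t}) B"
  by (rule inj_onI) (auto simp: doubleton_eq_iff)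

lemma arith_d2: "u \<le> 2*f \<Longrightarrow> A = u + c \<Longrightarrow> c \<le> Suc d \<Longrightarrow> F = s + f \<Longrightarrow> A = 2 * Suc e + 1 \<Longrightarrow> s = d \<Longrightarrow> F = Suc (Suc e) \<Longrightarrow> d \<le> (2::nat)"
  by simp

lemma arith_x: "(a::nat) \<le> b \<Longrightarrow> b \<le> 2*f \<Longrightarrow> a = A - c \<Longrightarrow> c = 2 \<Longrightarrow> f = e \<Longrightarrow> A = 2*Suc e + 1 \<Longrightarrow> False"
  by simp

lemma arith_y: "(a::nat) \<le> b \<Longrightarrow> b \<le> 2*f \<Longrightarrow> a = A - c \<Longrightarrow> c = 3 \<Longrightarrow> f = e \<Longrightarrow> A = 2*Suc e + 1 \<Longrightarrow> a = b"
  by simp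

lemma q_step:
  fixes A :: "'a set" and e :: nat
  assumes IH: "\<And>B::'a set. finite B \<Longrightarrow> card B = 2*e+1 \<Longrightarrow> card (Gr B (Suc e)) = Suc e * dfact (2*e+1)"
    and finA: "finite A" and cA: "card A = 2*Suc e+1"
  shows "card (Gr A (Suc (Suc e))) = Suc (Suc e) * dfact (2*Suc e + 1)"
proof -
  obtain x where x: "x \<in> A" using cA by fastforce
  define G1 where "G1 = (\<lambda>y. Gr (A - {x}) (Suc e) \<union> Gr (A - {x,y}) (Suc e))"
  define Sig1 where "Sig1 = Sigma A G1"
  define I2 where "I2 = {T. T \<subseteq> A - {x} \<and> card T = 2}"
  define Sig2 where "Sig2 = Sigma I2 (\<lambda>T. Gr (A - insert x T) e)"
  define phi where "phi = (\<lambda>(y::'a, F'::'a set set). insert {x,y} F')"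
  define psi where "psi = (\<lambda>(T::'a set, F'::'a set set). (\<lambda>t. {x,t}) ` T \<union> F')"
  have cAx: "card (A - {x}) = 2 * Suc e" using x finA cA by simp
  have Sig1D: "y \<in> A" "F' \<in> Gr (A - {x}) (Suc e) \<or> F' \<in> Gr (A - {x,y}) (Suc e)" if "(y,F') \<in> Sig1" for y F'
    using that by (auto simp: Sig1_def G1_def)
  have xnot1: "x \<notin> \<Union>F'" if "(y,F') \<in> Sig1" for y F'
    using Sig1D[OF that] GrD(4)[of F'] by auto
  have Sig2D: "T \<subseteq> A - {x}" "card T = 2" "F' \<in> Gr (A - insert x T) e" if "(T,F') \<in> Sig2" for T F'
    using that by (auto simp: Sig2_def I2_def)
  have xnot2: "x \<notin> \<Union>F'" if "(T,F') \<in> Sig2" for T F'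
    using Sig2D[OF that] GrD(4)[of F'] by auto
  have star1: "{X \<in> phi p. x \<in> X} = {{x, fst p}}" if "p \<in> Sig1" for p
    using that xnot1[of "fst p" "snd p"] by (auto simp: phi_def split: prod.splits)
  have star2: "{X \<in> psi p. x \<in> X} = (\<lambda>t. {x,t}) ` fst p" if "p \<in> Sig2" for p
    using that xnot2[of "fst p" "snd p"] by (auto simp: psi_def split: prod.splits)
  have inj1: "inj_on phi Sig1"
  proof (rule inj_onI)
    fix p q assume p: "p \<in> Sig1" and q: "q \<in> Sig1" and eq: "phi p = phi q"
    obtain y F' where p': "p = (y,F')" by fastforce
    obtain z F'' where q': "q = (z,F'')" by fastforce
    have "{{x,y}} = {{x,z}}" using star1[OF p] star1[OF q] eq p' q' by simp
    then have yz: "y = z" by (auto simp: doubleton_eq_iff)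
    have n1: "{x,y} \<notin> F'" using xnot1[of y F'] p p' by auto
    have n2: "{x,z} \<notin> F''" using xnot1[of z F''] q q' by auto
    have "F' = insert {x,y} F' - {{x,y}}" using n1 by auto
    also have "\<dots> = insert {x,z} F'' - {{x,z}}" using eq p' q' yz by (simp add: phi_def)
    also have "\<dots> = F''" using n2 by auto
    finally show "p = q" using p' q' yz by simp
  qed
  have inj2: "inj_on psi Sig2"
  proof (rule inj_onI)
    fix p q assume p: "p \<in> Sig2" and q: "q \<in> Sig2" and eq: "psi p = psi q"
    obtain T F' where p': "p = (T,F')" by fastforce
    obtain T2 F'' where q': "q = (T2,F'')" by fastforce
    have "(\<lambda>t. {x,t}) ` T = (\<lambda>t. {x,t}) ` T2" using star2[OF p] star2[OF q] eq p' q' by simp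
    then have TT: "T = T2" using inj_on_image_eq_iff[OF pairx_inj[of x "T \<union> T2"]] by blast
    have n1: "(\<lambda>t. {x,t}) ` T \<inter> F' = {}" using xnot2[of T F'] p p' by auto
    have n2: "(\<lambda>t. {x,t}) ` T2 \<inter> F'' = {}" using xnot2[of T2 F''] q q' by auto
    have "F' = psi p - (\<lambda>t. {x,t}) ` T" using n1 p' by (auto simp: psi_def)
    also have "\<dots> = psi q - (\<lambda>t. {x,t}) ` T2" using eq TT by simp
    also have "\<dots> = F''" using n2 q' by (auto simp: psi_def)
    finally show "p = q" using p' q' TT by simp
  qed
  have disj: "phi ` Sig1 \<inter> psi ` Sig2 = {}"
  proof (rule ccontr)
    assume "phi ` Sig1 \<inter> psi ` Sig2 \<noteq> {}"
    then obtain p q where p: "p \<in> Sig1" and q: "q \<in> Sig2" and eq: "phi p = psi q" by blast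
    have "card {X \<in> phi p. x \<in> X} = 1" using star1[OF p] by simp
    moreover have "card {X \<in> psi q. x \<in> X} = 2"
      using star2[OF q] card_image[OF pairx_inj[of x "fst q"]] Sig2D(2)[of "fst q" "snd q"] q by simp
    ultimately show False using eq by simp
  qed
  have img1: "phi ` Sig1 \<subseteq> Gr A (Suc (Suc e))"
  proof
    fix F assume "F \<in> phi ` Sig1"
    then obtain y F' where yF: "(y,F') \<in> Sig1" "F = insert {x,y} F'" by (auto simp: phi_def)
    note yD = Sig1D[OF yF(1)]
    have Gp0: "finite F' \<and> F' \<subseteq> Edg A \<and> card F' = Suc e \<and> A - {x,y} \<subseteq> \<Union>F' \<and> \<Union>F' \<subseteq> A"
    proof -
      from yD(2) show ?thesis
      proof
        assume G: "F' \<in> Gr (A - {x}) (Suc e)"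
        show ?thesis using GrD[OF G] Edg_mono[of "A - {x}" A] by auto
      next
        assume G: "F' \<in> Gr (A - {x,y}) (Suc e)"
        show ?thesis using GrD[OF G] Edg_mono[of "A - {x,y}" A] by auto
      qed
    qed
    then have Gp: "finite F'" "F' \<subseteq> Edg A" "card F' = Suc e" "A - {x,y} \<subseteq> \<Union>F'" "\<Union>F' \<subseteq> A"
      by simp_all
    have n1: "{x,y} \<notin> F'" using xnot1[OF yF(1)] by auto
    show "F \<in> Gr A (Suc (Suc e))"
    proof (rule GrI)
      show "finite F" using Gp(1) yF(2) by simp
      have "{x,y} \<in> Edg A" using x yD(1) by (auto simp: Edg_def card_insert_if)
      then show "F \<subseteq> Edg A" using Gp(2) yF(2) by auto
      show "card F = Suc (Suc e)" using Gp(1,3) n1 yF(2) by simp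
      show "\<Union>F = A" using Gp(4,5) yF(2) x yD(1) by auto
    qed
  qed
  have img2: "psi ` Sig2 \<subseteq> Gr A (Suc (Suc e))"
  proof
    fix F assume "F \<in> psi ` Sig2"
    then obtain T F' where TF: "(T,F') \<in> Sig2" "F = (\<lambda>t. {x,t}) ` T \<union> F'" by (auto simp: psi_def)
    note TD = Sig2D[OF TF(1)]
    note Gp = GrD[OF TD(3)]
    have n1: "(\<lambda>t. {x,t}) ` T \<inter> F' = {}" using xnot2[OF TF(1)] by auto
    have fT: "finite T" using TD(2) card.infinite by fastforce
    show "F \<in> Gr A (Suc (Suc e))"
    proof (rule GrI)
      show "finite F" using Gp(1) fT TF(2) by simp
      have "{x,t} \<in> Edg A" if "t \<in> T" for t
      proof -
        have "t \<in> A" "t \<noteq> x" using that TD(1) by auto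
        then show ?thesis using x by (auto simp: Edg_def)
      qed
      then have "(\<lambda>t. {x,t}) ` T \<subseteq> Edg A" by auto
      then show "F \<subseteq> Edg A" using Gp(2) Edg_mono[of "A - insert x T" A] TF(2) by auto
      have "card F = card ((\<lambda>t. {x,t}) ` T) + card F'"
        unfolding TF(2) using fT Gp(1) n1 by (intro card_Un_disjoint) auto
      then show "card F = Suc (Suc e)" using card_image[OF pairx_inj[of x T]] TD(2) Gp(3) by simp
      have "T \<noteq> {}" using TD(2) by auto
      then show "\<Union>F = A" using Gp(4) TF(2) x TD(1) by auto
    qed
  qed
  have cover: "Gr A (Suc (Suc e)) \<subseteq> phi ` Sig1 \<union> psi ` Sig2"
  proof
    fix F assume F: "F \<in> Gr A (Suc (Suc e))"
    note Fp = GrD[OF F]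
    define Tt where "Tt = {t \<in> A. {x,t} \<in> F}"
    define S where "S = (\<lambda>t. {x,t}) ` Tt"
    define F' where "F' = F - S"
    have fTt: "finite Tt" using finA by (simp add: Tt_def)
    have S_eq: "S = {X \<in> F. x \<in> X}"
    proof
      show "S \<subseteq> {X \<in> F. x \<in> X}" by (auto simp: S_def Tt_def)
      show "{X \<in> F. x \<in> X} \<subseteq> S"
      proof
        fix X assume "X \<in> {X \<in> F. x \<in> X}"
        then have X: "X \<in> F" "x \<in> X" by auto
        then obtain t where "t \<in> A" "X = {x,t}" using edge_x[of X A x] Fp(2) by auto
        then show "X \<in> S" using X by (auto simp: S_def Tt_def)
      qed
    qed
    have SF: "S \<subseteq> F" using S_eq by auto
    have cS: "card S = card Tt" unfolding S_def by (rule card_image[OF pairx_inj])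
    have fF': "finite F'" using Fp(1) by (simp add: F'_def)
    have cF: "card F = card S + card F'"
      using card_Un_disjoint[of S F'] Fp(1) SF by (auto simp: F'_def finite_subset Un_absorb1)
    have xF': "x \<notin> \<Union>F'" using S_eq by (auto simp: F'_def)
    have U1: "A - insert x Tt \<subseteq> \<Union>F'"
    proof
      fix a assume a: "a \<in> A - insert x Tt"
      then obtain Z where Z: "Z \<in> F" "a \<in> Z" using Fp(4) by blast
      have "Z \<notin> S"
      proof
        assume "Z \<in> S"
        then obtain t where "t \<in> Tt" "Z = {x,t}" by (auto simp: S_def)
        then show False using a Z(2) by auto
      qed
      then show "a \<in> \<Union>F'" using Z by (auto simp: F'_def)
    qed
    have U2: "\<Union>F' \<subseteq> A - {x}" using xF' Fp(4) by (auto simp: F'_def)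
    have F'E: "F' \<subseteq> Edg (\<Union>F')"
    proof
      fix Z assume "Z \<in> F'"
      then have "Z \<in> Edg A" using Fp(2) by (auto simp: F'_def)
      then show "Z \<in> Edg (\<Union>F')" using \<open>Z \<in> F'\<close> by (auto simp: Edg_def)
    qed
    have finU: "finite (\<Union>F')" using U2 finA finite_subset by blast
    have cb: "card (\<Union>F') \<le> 2 * card F'"
      using cover_bound[of F'] fF' Fp(2) Edg_le2 by (auto simp: F'_def)
    have TtA: "Tt \<subseteq> A" by (auto simp: Tt_def)
    have ci: "card (insert x Tt) \<le> Suc (card Tt)" by (simp add: card_insert_le_m1 card_insert_if)
    have cAT: "card (A - insert x Tt) = card A - card (insert x Tt)"
      using TtA x fTt by (intro card_Diff_subset) auto
    have c1: "card (A - insert x Tt) \<le> card (\<Union>F')" using card_mono[OF finU U1] .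
    have ciA: "card (insert x Tt) \<le> card A" using TtA x finA by (intro card_mono) auto
    define u where "u = card (A - insert x Tt)"
    have h1: "u \<le> 2 * card F'" using c1 cb unfolding u_def by (rule order_trans)
    have h2: "card A = u + card (insert x Tt)" using cAT ciA unfolding u_def by simp
    have d2: "card Tt \<le> 2" by (rule arith_d2[OF h1 h2 ci cF cA cS Fp(3)])
    have "S \<noteq> {}" using S_eq x Fp(4) by blast
    then have d1: "card Tt \<ge> 1" using cS fTt by (simp add: S_def Suc_le_eq card_gt_0_iff)
    show "F \<in> phi ` Sig1 \<union> psi ` Sig2"
    proof (cases "card Tt = 1")
      case True
      then obtain y where y: "Tt = {y}" by (auto simp: card_Suc_eq)
      then have yA: "y \<in> A" using TtA by auto
      have cF': "card F' = Suc e" using cF cS True Fp(3) by simp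
      have "\<Union>F' = A - {x} \<or> \<Union>F' = A - {x,y}"
      proof (cases "y \<in> \<Union>F'")
        case True
        then show ?thesis using U1 U2 y by auto
      next
        case False
        then show ?thesis using U1 U2 y by auto
      qed
      then have "F' \<in> G1 y" unfolding G1_def using GrI[OF fF' F'E cF'] by auto
      then have "(y,F') \<in> Sig1" using yA by (simp add: Sig1_def)
      moreover have "phi (y,F') = F" using SF y by (auto simp: phi_def F'_def S_def)
      ultimately show ?thesis by force
    next
      case False
      then have cT: "card Tt = 2" using d1 d2 by simp
      have cF': "card F' = e" using cF cS cT Fp(3) by simp
      have xT: "x \<notin> Tt"
      proof
        assume "x \<in> Tt"
        then have "card (insert x Tt) = 2" using cT by (simp add: insert_absorb)
        then show False by (rule arith_x[OF c1 cb cAT _ cF' cA])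
      qed
      then have ci3: "card (insert x Tt) = 3" using cT fTt by simp
      have "card (A - insert x Tt) = card (\<Union>F')" by (rule arith_y[OF c1 cb cAT ci3 cF' cA])
      then have "\<Union>F' = A - insert x Tt"
        using card_subset_eq[OF finU U1] by simp
      then have "F' \<in> Gr (A - insert x Tt) e" using GrI[OF fF' F'E cF'] by simp
      moreover have "Tt \<in> I2" using TtA xT cT by (auto simp: I2_def)
      ultimately have "(Tt,F') \<in> Sig2" by (simp add: Sig2_def)
      moreover have "psi (Tt,F') = F" using SF by (auto simp: psi_def F'_def S_def)
      ultimately show ?thesis by force
    qed
  qed
  have GA: "Gr A (Suc (Suc e)) = phi ` Sig1 \<union> psi ` Sig2" by (rule equalityI[OF cover Un_least[OF img1 img2]])
  have "I2 \<subseteq> Pow A" by (auto simp: I2_def)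
  then have finI2: "finite I2" using finA by (meson finite_Pow_iff finite_subset)
  have finS1: "finite Sig1" unfolding Sig1_def
    by (rule finite_SigmaI) (simp_all add: finA G1_def finite_Gr)
  have finS2: "finite Sig2" unfolding Sig2_def
    by (rule finite_SigmaI) (simp_all add: finI2 finA finite_Gr)
  define P where "P = dfact (2*e+1)"
  have cG1x: "card (G1 x) = P"
  proof -
    have "G1 x = Gr (A - {x}) (Suc e)" by (simp add: G1_def)
    then show ?thesis using pm[of "A - {x}" "Suc e"] finA cAx by (simp add: P_def)
  qed
  have cG1y: "card (G1 y) = P + Suc e * P" if "y \<in> A - {x}" for y
  proof -
    have cAxy: "card (A - {x,y}) = 2*e+1"
    proof -
      have "card (A - {x,y}) = card A - card {x,y}" using that x finA by (intro card_Diff_subset) auto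
      then show ?thesis using that cA by (auto simp: card_insert_if)
    qed
    have d: "Gr (A - {x}) (Suc e) \<inter> Gr (A - {x,y}) (Suc e) = {}"
    proof (rule ccontr)
      assume "Gr (A - {x}) (Suc e) \<inter> Gr (A - {x,y}) (Suc e) \<noteq> {}"
      then obtain F where F1: "F \<in> Gr (A - {x}) (Suc e)" and F2: "F \<in> Gr (A - {x,y}) (Suc e)" by blast
      have "A - {x} = A - {x,y}" using GrD(4)[OF F1] GrD(4)[OF F2] by simp
      then show False using that by blast
    qed
    have "card (G1 y) = card (Gr (A - {x}) (Suc e)) + card (Gr (A - {x,y}) (Suc e))"
      unfolding G1_def using d finA by (intro card_Un_disjoint) (simp_all add: finite_Gr)
    also have "card (Gr (A - {x}) (Suc e)) = P" using pm[of "A - {x}" "Suc e"] finA cAx by (simp add: P_def)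
    also have "card (Gr (A - {x,y}) (Suc e)) = Suc e * P" using IH[of "A - {x,y}"] finA cAxy by (simp add: P_def)
    finally show ?thesis .
  qed
  have cS1: "card Sig1 = P + (2*e+2) * (P + Suc e * P)"
  proof -
    have "card Sig1 = (\<Sum>y\<in>A. card (G1 y))" unfolding Sig1_def using finA by (simp add: G1_def finite_Gr)
    also have "\<dots> = card (G1 x) + (\<Sum>y\<in>A-{x}. card (G1 y))" using finA x by (simp add: sum.remove)
    also have "(\<Sum>y\<in>A-{x}. card (G1 y)) = (\<Sum>y\<in>A-{x}. P + Suc e * P)" using cG1y by simp
    finally show ?thesis using cG1x cAx by simp
  qed
  have cS2: "card Sig2 = (Suc e * (2*e+1)) * dfact (2*e-1)"
  proof -
    have cT: "card (Gr (A - insert x T) e) = dfact (2*e-1)" if "T \<in> I2" for T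
    proof -
      have T: "T \<subseteq> A - {x}" "card T = 2" using that by (auto simp: I2_def)
      have fT: "finite T" using T(2) card.infinite by fastforce
      have "card (A - insert x T) = card A - card (insert x T)" using T x finA fT by (intro card_Diff_subset) auto
      also have "card (insert x T) = 3" proof - have "x \<notin> T" using T(1) by auto then show ?thesis using T(2) fT by simp qed
      finally have "card (A - insert x T) = 2*e" using cA by simp
      then show ?thesis using pm[of "A - insert x T" e] finA by simp
    qed
    have "card Sig2 = (\<Sum>T\<in>I2. card (Gr (A - insert x T) e))" unfolding Sig2_def using finI2 finA by (simp add: finite_Gr)
    also have "\<dots> = card I2 * dfact (2*e-1)" using cT by simp
    also have "card I2 = (2*e+2) choose 2" unfolding I2_def using n_subsets[of "A - {x}" 2] finA cAx by simp
    also have "(2*e+2) choose 2 = Suc e * (2*e+1)" by (simp add: choose_two)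
    finally show ?thesis .
  qed
  have "card (Gr A (Suc (Suc e))) = card Sig1 + card Sig2"
    unfolding GA using disj card_image[OF inj1] card_image[OF inj2] finS1 finS2
    by (simp add: card_Un_disjoint)
  also have "\<dots> = Suc (Suc e) * dfact (2*Suc e + 1)"
  proof -
    have s1: "dfact (2*Suc e+1) = (2*e+3) * P" using dfact_step[of "Suc e"] by (simp add: P_def algebra_simps)
    have s2: "P = (2*e+1) * dfact (2*e-1)" using dfact_step[of e] by (simp add: P_def)
    show ?thesis unfolding cS1 cS2 s1 using s2 by (simp add: algebra_simps)
  qed
  finally show ?thesis .
qed

lemma q_count: "finite A \<Longrightarrow> card A = 2*e+1 \<Longrightarrow> card (Gr A (Suc e)) = Suc e * dfact (2*e+1)"
proof (induction e arbitrary: A)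
  case 0 then show ?case using Gr_base by simp
next
  case (Suc e)
  show ?case by (rule q_step[OF Suc.IH Suc.prems])
qed

definition supp :: "nat list \<Rightarrow> nat set" where "supp a = {i. i < length a \<and> 0 < a!i}"
definition recon :: "nat \<Rightarrow> nat set \<Rightarrow> nat list" where
  "recon M X = map (\<lambda>t. if t \<in> X then (if card X = 1 then 2 else 1) else 0) [0..<M]"

lemma recon_len[simp]: "length (recon M X) = M" by (simp add: recon_def)
lemma recon_nth: "t < M \<Longrightarrow> recon M X ! t = (if t \<in> X then (if card X = 1 then 2 else 1) else 0)"
  by (simp add: recon_def)

lemma recon_props: assumes "X \<subseteq> {..<M}" "card X = 1 \<or> card X = 2"
  shows "sum_list (recon M X) = 2" "supp (recon M X) = X"
proof -
  define c :: nat where "c = (if card X = 1 then 2 else 1)"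
  have "sum_list (recon M X) = (\<Sum>t<M. if t \<in> X then c else 0)"
    unfolding recon_def c_def[symmetric] by (rule sum_map_upt)
  also have "\<dots> = (\<Sum>t\<in>{..<M} \<inter> X. c)" using sum.inter_restrict[of "{..<M}" "\<lambda>_. c" X] by simp
  also have "{..<M} \<inter> X = X" using assms(1) by auto
  also have "(\<Sum>t\<in>X. c) = card X * c" by simp
  finally show "sum_list (recon M X) = 2" using assms(2) by (auto simp: c_def)
  show "supp (recon M X) = X" using assms by (auto simp: supp_def recon_nth split: if_splits)
qed

lemma supp_props: assumes "length a = M" "sum_list a = 2"
  shows "supp a \<subseteq> {..<M}" "card (supp a) = 1 \<or> card (supp a) = 2" "recon M (supp a) = a"
proof -
  define S where "S = supp a"
  show "supp a \<subseteq> {..<M}" using assms by (auto simp: supp_def)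
  then have SM: "S \<subseteq> {..<M}" by (simp add: S_def)
  have fS: "finite S" using SM finite_subset by blast
  have sumS: "(\<Sum>i\<in>S. a!i) = 2"
  proof -
    have "(\<Sum>i\<in>S. a!i) = (\<Sum>i<M. a!i)"
      using SM by (intro sum.mono_neutral_left) (auto simp: S_def supp_def assms(1))
    then show ?thesis using assms by (simp add: sum_list_nth)
  qed
  have pos: "i \<in> S \<Longrightarrow> 1 \<le> a!i" for i by (auto simp: S_def supp_def)
  have "card S \<le> (\<Sum>i\<in>S. a!i)"
  proof -
    have "(\<Sum>i\<in>S. (1::nat)) \<le> (\<Sum>i\<in>S. a!i)" using pos by (rule sum_mono)
    then show ?thesis by simp
  qed
  then have c2: "card S \<le> 2" using sumS by simp
  have "S \<noteq> {}" using sumS by auto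
  then have c1: "card S \<ge> 1" using fS by (simp add: Suc_le_eq card_gt_0_iff)
  have cases: "card S = 1 \<or> card S = 2" using c1 c2 by auto
  then show "card (supp a) = 1 \<or> card (supp a) = 2" by (simp add: S_def)
  have vals: "a!t = (if t \<in> S then (if card S = 1 then 2 else 1) else 0)" if "t < M" for t
  proof (cases "t \<in> S")
    case False then show ?thesis using that assms(1) by (auto simp: S_def supp_def)
  next
    case True
    show ?thesis
    proof (cases "card S = 1")
      case c: True
      then obtain i where "S = {i}" by (auto simp: card_Suc_eq)
      then show ?thesis using True sumS c by simp
    next
      case c: False
      then have "card S = 2" using cases by simp
      then obtain i j where ij: "S = {i,j}" "i \<noteq> j" by (auto simp: card_2_iff)
      then have "a!i + a!j = 2" using sumS by simp
      moreover have "1 \<le> a!i" "1 \<le> a!j" using pos ij by auto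
      ultimately have "a!i = 1" "a!j = 1" by auto
      then show ?thesis using True c ij by auto
    qed
  qed
  show "recon M (supp a) = a"
  proof (rule nth_equalityI)
    show "length (recon M (supp a)) = length a" using assms by simp
    fix t assume "t < length (recon M (supp a))"
    then have t: "t < M" by simp
    show "recon M (supp a) ! t = a ! t" using vals[OF t] t by (simp add: recon_nth S_def)
  qed
qed

lemma cover2: assumes E: "E \<in> Cfg M e" and a: "a \<in> E" and i: "i < M" "0 < a!i"
  shows "\<exists>b\<in>E. sum_list b = 2 \<and> 0 < b!i"
proof -
  note Ep = CfgD[OF E]
  have la: "length a = M" using Ep(3)[OF a] .
  have sa: "2 \<le> sum_list a" using Ep(4)[OF a] .
  obtain X where X: "X \<subseteq> {..<M}" "card X = 1 \<or> card X = 2" "i \<in> X"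
    and le: "\<And>t. t \<in> X \<Longrightarrow> (if card X = 1 then 2 else 1) \<le> a!t"
  proof (cases "2 \<le> a!i")
    case True
    show ?thesis by (rule that[of "{i}"]) (use True i in auto)
  next
    case False
    then have ai: "a!i = 1" using i by simp
    have "(\<Sum>t\<in>{..<M}-{i}. a!t) \<noteq> 0"
    proof
      assume "(\<Sum>t\<in>{..<M}-{i}. a!t) = 0"
      moreover have "(\<Sum>t<M. a!t) = a!i + (\<Sum>t\<in>{..<M}-{i}. a!t)"
        using i by (simp add: sum.remove)
      ultimately show False using sa ai la by (simp add: sum_list_nth)
    qed
    then obtain j where j: "j \<in> {..<M}-{i}" "a!j \<noteq> 0" by (meson sum.neutral)
    show ?thesis by (rule that[of "{i,j}"]) (use j i ai in auto)
  qed
  define b where "b = recon M X"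
  have sb: "sum_list b = 2" and sup: "supp b = X" using recon_props[OF X(1,2)] by (simp_all add: b_def)
  have "vle b a" unfolding vle_def
  proof (intro conjI allI impI)
    show "length b = length a" using la by (simp add: b_def)
    fix t assume "t < length a"
    then show "b!t \<le> a!t" using le la by (simp add: b_def recon_nth)
  qed
  then have "b \<in> E" using Ep(5)[OF a] sb by simp
  moreover have "0 < b!i" using sup X(3) by (auto simp: supp_def)
  ultimately show ?thesis using sb by blast
qed

lemma all2: assumes E: "E \<in> Wset M 0 e" and Me: "2*e \<le> M+1" and a: "a \<in> E"
  shows "sum_list a = 2"
proof (rule ccontr)
  assume ne: "sum_list a \<noteq> 2"
  have EC: "E \<in> Cfg M e" and us: "\<And>i. i < M \<Longrightarrow> used E i" using E by (auto simp: Wset_def)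
  note Ep = CfgD[OF EC]
  define E2 where "E2 = {b \<in> E. sum_list b = 2}"
  have fE2: "finite E2" using Ep(1) by (simp add: E2_def)
  have "E2 \<subset> E" using a ne by (auto simp: E2_def)
  then have cE2: "card E2 < e" using Ep(1,2) psubset_card_mono by blast
  have cov: "{..<M} \<subseteq> \<Union>(supp ` E2)"
  proof
    fix i assume "i \<in> {..<M}"
    then have i: "i < M" by simp
    then obtain b where "b \<in> E" "0 < b!i" using us[OF i] by (auto simp: used_def)
    then obtain c where c: "c \<in> E" "sum_list c = 2" "0 < c!i" using cover2[OF EC _ i] by blast
    then have "i \<in> supp c" using i Ep(3)[OF c(1)] by (simp add: supp_def)
    then show "i \<in> \<Union>(supp ` E2)" using c by (auto simp: E2_def)
  qed
  have "card (\<Union>(supp ` E2)) \<le> 2 * card (supp ` E2)"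
  proof (rule cover_bound)
    show "finite (supp ` E2)" using fE2 by simp
    fix X assume "X \<in> supp ` E2"
    then obtain b where "b \<in> E2" "X = supp b" by auto
    then show "card X \<le> 2" using supp_props(2)[of b M] Ep(3) by (auto simp: E2_def)
  qed
  also have "\<dots> \<le> 2 * card E2" using card_image_le[OF fE2, of supp] by simp
  finally have "card (\<Union>(supp ` E2)) \<le> 2 * card E2" .
  moreover have "M \<le> card (\<Union>(supp ` E2))"
  proof -
    have "finite (\<Union>(supp ` E2))" using fE2 by (auto simp: supp_def)
    then show ?thesis using card_mono[OF _ cov] by simp
  qed
  ultimately show False using cE2 Me by linarith
qed

lemma Wset_Gr: assumes Me: "2*e \<le> M+1"
  shows "card (Wset M 0 e) = card (Gr {..<M} e)"
proof -
  have WD: "E \<in> Cfg M e" "\<And>a. a \<in> E \<Longrightarrow> length a = M" "\<And>a. a \<in> E \<Longrightarrow> sum_list a = 2"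
    "\<And>i. i < M \<Longrightarrow> used E i" if "E \<in> Wset M 0 e" for E
  proof -
    show EC: "E \<in> Cfg M e" using that by (simp add: Wset_def)
    show "\<And>a. a \<in> E \<Longrightarrow> length a = M" using CfgD(3)[OF EC] .
    show "\<And>a. a \<in> E \<Longrightarrow> sum_list a = 2" using all2[OF that Me] .
    show "\<And>i. i < M \<Longrightarrow> used E i" using that by (simp add: Wset_def)
  qed
  have "bij_betw (\<lambda>E. supp ` E) (Wset M 0 e) (Gr {..<M} e)"
  proof (rule bij_betw_byWitness[where f'="\<lambda>F. recon M ` F"])
    show "\<forall>E\<in>Wset M 0 e. recon M ` supp ` E = E"
    proof
      fix E assume E: "E \<in> Wset M 0 e"
      have "recon M (supp a) = a" if "a \<in> E" for a using supp_props(3) WD[OF E] that by blast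
      then show "recon M ` supp ` E = E" by (simp add: image_image)
    qed
    show "\<forall>F\<in>Gr {..<M} e. supp ` recon M ` F = F"
    proof
      fix F assume F: "F \<in> Gr {..<M} e"
      have "supp (recon M X) = X" if "X \<in> F" for X
        using recon_props(2) GrD(2)[OF F] that by (auto simp: Edg_def)
      then show "supp ` recon M ` F = F" by (simp add: image_image)
    qed
    show "(\<lambda>E. supp ` E) ` Wset M 0 e \<subseteq> Gr {..<M} e"
    proof
      fix F assume "F \<in> (\<lambda>E. supp ` E) ` Wset M 0 e"
      then obtain E where E: "E \<in> Wset M 0 e" "F = supp ` E" by auto
      note W = WD[OF E(1)]
      note Ep = CfgD[OF W(1)]
      have inj: "inj_on supp E"
      proof (rule inj_onI)
        fix a b assume ab: "a \<in> E" "b \<in> E" "supp a = supp b"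
        have "a = recon M (supp a)" using supp_props(3)[OF W(2)[OF ab(1)] W(3)[OF ab(1)]] by simp
        also have "\<dots> = recon M (supp b)" using ab(3) by simp
        also have "\<dots> = b" using supp_props(3)[OF W(2)[OF ab(2)] W(3)[OF ab(2)]] by simp
        finally show "a = b" .
      qed
      show "F \<in> Gr {..<M} e"
      proof (rule GrI)
        show "finite F" using Ep(1) E(2) by simp
        show "F \<subseteq> Edg {..<M}"
        proof
          fix X assume "X \<in> F"
          then obtain a where a: "a \<in> E" "X = supp a" using E(2) by auto
          show "X \<in> Edg {..<M}" using supp_props(1,2)[OF W(2)[OF a(1)] W(3)[OF a(1)]] a(2)
            by (simp add: Edg_def)
        qed
        show "card F = e" using E(2) card_image[OF inj] Ep(2) by simp
        show "\<Union>F = {..<M}"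
        proof
          show "\<Union>F \<subseteq> {..<M}"
          proof
            fix i assume "i \<in> \<Union>F"
            then obtain a where a: "a \<in> E" "i \<in> supp a" using E(2) by auto
            then show "i \<in> {..<M}" using W(2)[OF a(1)] by (simp add: supp_def)
          qed
          show "{..<M} \<subseteq> \<Union>F"
          proof
            fix i assume "i \<in> {..<M}"
            then obtain a where "a \<in> E" "0 < a!i" using W(4) by (auto simp: used_def)
            then show "i \<in> \<Union>F" using E(2) W(2) \<open>i \<in> {..<M}\<close> by (auto simp: supp_def)
          qed
        qed
      qed
    qed
    show "(\<lambda>F. recon M ` F) ` Gr {..<M} e \<subseteq> Wset M 0 e"
    proof
      fix E assume "E \<in> (\<lambda>F. recon M ` F) ` Gr {..<M} e"
      then obtain F where F: "F \<in> Gr {..<M} e" "E = recon M ` F" by auto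
      note Fp = GrD[OF F(1)]
      have XE: "X \<subseteq> {..<M}" "card X = 1 \<or> card X = 2" if "X \<in> F" for X
        using Fp(2) that by (auto simp: Edg_def)
      have inj: "inj_on (recon M) F"
      proof (rule inj_onI)
        fix X Y assume XY: "X \<in> F" "Y \<in> F" "recon M X = recon M Y"
        have "X = supp (recon M X)" using recon_props(2)[OF XE[OF XY(1)]] by simp
        also have "\<dots> = supp (recon M Y)" using XY(3) by simp
        also have "\<dots> = Y" using recon_props(2)[OF XE[OF XY(2)]] by simp
        finally show "X = Y" .
      qed
      have EC: "E \<in> Cfg M e"
      proof (rule CfgI)
        show "finite E" using Fp(1) F(2) by simp
        show "card E = e" using F(2) card_image[OF inj] Fp(3) by simp
        show "\<And>a. a \<in> E \<Longrightarrow> length a = M" using F(2) by auto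
        show "2 \<le> sum_list a" if ha: "a \<in> E" for a
        proof -
          obtain X where X: "X \<in> F" "a = recon M X" using ha F(2) by auto
          show ?thesis using recon_props(1)[OF XE[OF X(1)]] X(2) by simp
        qed
        show "y \<in> E" if h: "a \<in> E" "vle y a" "2 \<le> sum_list y" for a y
        proof -
          obtain X where X: "X \<in> F" "a = recon M X" using h(1) F(2) by auto
          have "sum_list a = 2" using recon_props(1)[OF XE[OF X(1)]] X(2) by simp
          then have "sum_list y = sum_list a" using vle_sum[OF h(2)] h(3) by simp
          then have "y = a" using vle_sum_eq[OF h(2)] by simp
          then show ?thesis using h(1) by simp
        qed
      qed
      have "used E i" if hi: "i < M" for i
      proof -
        obtain X where X: "X \<in> F" "i \<in> X" using Fp(4) hi by blast
        then have "i \<in> supp (recon M X)" using recon_props(2)[OF XE[OF X(1)]] by simp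
        then show ?thesis using X F(2) by (auto simp: used_def supp_def)
      qed
      then show "E \<in> Wset M 0 e" using EC by (simp add: Wset_def)
    qed
  qed
  then show ?thesis by (rule bij_betw_same_card)
qed

theorem corollary3p5:
  fixes e :: nat
  assumes "e > 0"
  shows "(\<Sum>i=0..2*e-1. gamma e i) = int (dfact (2*e-1))
       \<and> (\<Sum>i=0..2*e-1. int (i+1) * gamma e i) = int e * int (dfact (2*e-1))"
proof -
  obtain e' where e': "e = Suc e'" using assms by (cases e) auto
  define n where "n = 2*e - 1"
  have n1: "n + 1 = 2*e" and n2: "n + 2 = 2*e+1" using assms by (simp_all add: n_def)
  define y where "y = (\<lambda>j. int (card (Cfg j e)))"
  have y0: "y 0 = 0"
  proof -
    have "Cfg 0 e = {}"
    proof (rule ccontr)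
      assume "Cfg 0 e \<noteq> {}"
      then obtain E where E: "E \<in> Cfg 0 e" by blast
      have "E = {}"
      proof (rule ccontr)
        assume "E \<noteq> {}"
        then obtain a where a: "a \<in> E" by blast
        have "length a = 0" using CfgD(3)[OF E a] .
        then have "a = []" by simp
        then show False using CfgD(4)[OF E a] by simp
      qed
      then show False using CfgD(2)[OF E] assms by simp
    qed
    then show ?thesis by (simp add: y_def)
  qed
  define G where "G = (\<lambda>h. (\<Sum>j=0..h. (-1)^(h+j) * int ((n+2) choose (h-j)) * y (j+1)))"
  define D where "D = (\<lambda>r. (\<Sum>j\<le>r. (-1)^(r+j) * int (r choose j) * y j))"
  have gG: "gamma e h = G h" for h
  proof -
    have "ycount (j+1) (j+e+2) = card (Cfg (j+1) e)" for j
      using ycount_Cfg[of "j+1" e] by (simp add: ac_simps)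
    then show ?thesis unfolding gamma_def G_def y_def using n2 by simp
  qed
  have DW: "D r = int (card (Wset r 0 e))" for r
    unfolding D_def y_def using W_formula[of r e] by simp
  define P where "P = dfact (2*e-1)"
  have D1: "D (n+1) = int P"
  proof -
    have "card (Wset (2*e) 0 e) = card (Gr {..<2*e} e)" by (rule Wset_Gr) simp
    also have "\<dots> = P" unfolding P_def by (rule pm) simp_all
    finally show ?thesis using DW n1 by simp
  qed
  have D0: "D n = int e * int P"
  proof -
    have "card (Wset n 0 e) = card (Gr {..<n} e)" by (rule Wset_Gr) (simp add: n_def)
    also have "\<dots> = Suc e' * dfact (2*e'+1)"
      unfolding e' by (rule q_count) (simp_all add: n_def e')
    also have "\<dots> = e * P" by (simp add: P_def e')
    finally show ?thesis using DW by simp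
  qed
  have A1: "(\<Sum>i=0..n. G i) = D (n+1)" and A2: "(\<Sum>i=0..n. int (i+1) * G i) = int (n+1) * D (n+1) - D n"
    using alg_main[of y n, OF y0] unfolding G_def D_def by simp_all
  have "(\<Sum>i=0..2*e-1. gamma e i) = int P"
    using A1 D1 gG by (simp add: n_def)
  moreover have "(\<Sum>i=0..2*e-1. int (i+1) * gamma e i) = int e * int P"
  proof -
    have "(\<Sum>i=0..2*e-1. int (i+1) * gamma e i) = int (n+1) * D (n+1) - D n"
      using A2 gG by (simp add: n_def)
    also have "\<dots> = int (2*e) * int P - int e * int P" using D1 D0 n1 by simp
    also have "\<dots> = int e * int P" by (simp add: algebra_simps)
    finally show ?thesis .
  qed
  ultimately show ?thesis by (simp add: P_def)
qed

end
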